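(* Let $G=(V,E)$ be a finite graph with at least one vertex and let $w\ge k>0$ be integers. Let $\mathcal F^w_k$ be the set of all stars $\sigma=\{(A_i,B_i):i=0,\dots,n\}\subseteq\vec S_k$ with $\bigl|\bigcap_{i=0}^nB_i\bigr|<w$. Then $\vec S_k$ is $\mathcal F^w_k$-separable: for all $\vec r,\vec r\,'\in\vec S_k$ with $\vec r\le\vec r\,'$ such that $\mathcal F^w_k$ forces neither $\vec r$ nor $\overleftarrow{r'}$, there is $(X,Y)\in\vec S_k$ that is $\mathcal F^w_k$-linked to $\vec r$ and such that $(Y,X)$ is $\mathcal F^w_k$-linked to $\overleftarrow{r'}$.
   Context: An oriented vertex separation of $G$ is an ordered pair $(A,B)$ with $A\cup B=V$ and no edge between $A\setminus B$ and $B\setminus A$. They form a universe $\vec U$ with $(A,B)\le(C,D)$ iff $A\subseteq C$, $B\supseteq D$; $(A,B)^*=(B,A)$; $(A,B)\vee(C,D)=(A\cup C,B\cap D)$; $(A,B)\wedge(C,D)=(A\cap C,B\cup D)$. $\vec S_k=\{(A,B)\in\vec U:|A\cap B|<k\}$, with separations $s=\{\vec s,\vec s^{\,*}\}$; write $\overleftarrow s=\vec s^{\,*}$; $s$ is degenerate if $\vec s=\overleftarrow s$; $\vec r$ is trivial if some separation $s$ has $\vec r<\vec s$ and $\vec r<\overleftarrow s$. A star is a nonempty set $\sigma$ with $\vec r\le\overleftarrow s$ for all distinct $\vec r,\vec s\in\sigma$. $\mathcal F$ forces $\vec r$ if $\{\overleftarrow r\}\in\mathcal F$ or $r$ is degenerate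 (unforced elements are nontrivial and nondegenerate). For nontrivial nondegenerate $\vec r$, $\vec S_{\ge\vec r}$ is the set of all orientations of separations of $\vec S_k$ having an orientation $\ge\vec r$; for $\vec s_0\ge\vec r$ the shifting map $f:\vec S_{\ge\vec r}\to\vec U$ is $f(\vec s)=\vec s\vee\vec s_0$, $f(\overleftarrow s)=(\vec s\vee\vec s_0)^*$ for all $\vec s\in\vec S_{\ge\vec r}\setminus\{\overleftarrow r\}$ with $\vec s\ge\vec r$. $\vec s_0$ is linked to $\vec r$ if $\vec s_0\ge\vec r$ and $\vec s\vee\vec s_0\in\vec S_k$ for all $\vec s\in\vec S_k$ with $\vec s\ge\vec r$, $\vec s\ne\overleftarrow r$; it is $\mathcal F$-linked to $\vec r$ if moreover $f(\sigma)\in\mathcal F$ for every star $\sigma\in\mathcal F$ with $\sigma\subseteq\vec S_{\ge\vec r}\setminus\{\overleftarrow r\}$ having an element $\ge\vec r$. *)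

theory Defs
  imports Main
begin

type_synonym 'a osep = "'a set \<times> 'a set"

definition graph :: "'a set \<Rightarrow> 'a set set \<Rightarrow> bool" where
  "graph V E \<longleftrightarrow> finite V \<and> (\<forall>e\<in>E. e \<subseteq> V \<and> card e = 2)"

definition is_osep :: "'a set \<Rightarrow> 'a set set \<Rightarrow> 'a osep \<Rightarrow> bool" where
  "is_osep V E s \<longleftrightarrow> fst s \<union> snd s = V \<and>
     \<not> (\<exists>e\<in>E. e \<inter> (fst s - snd s) \<noteq> {} \<and> e \<inter> (snd s - fst s) \<noteq> {})"

definition U :: "'a set \<Rightarrow> 'a set set \<Rightarrow> 'a osep set" where
  "U V E = {s. is_osep V E s}"

definition sep_le :: "'a osep \<Rightarrow> 'a osep \<Rightarrow> bool" where
  "sep_le s t \<longleftrightarrow> fst s \<subseteq> fst t \<and> snd t \<subseteq> snd s"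

definition sep_less :: "'a osep \<Rightarrow> 'a osep \<Rightarrow> bool" where
  "sep_less s t \<longleftrightarrow> sep_le s t \<and> s \<noteq> t"

definition inv :: "'a osep \<Rightarrow> 'a osep" where
  "inv s = (snd s, fst s)"

definition sep_join :: "'a osep \<Rightarrow> 'a osep \<Rightarrow> 'a osep" where
  "sep_join s t = (fst s \<union> fst t, snd s \<inter> snd t)"

definition sep_meet :: "'a osep \<Rightarrow> 'a osep \<Rightarrow> 'a osep" where
  "sep_meet s t = (fst s \<inter> fst t, snd s \<union> snd t)"

definition Sk :: "'a set \<Rightarrow> 'a set set \<Rightarrow> nat \<Rightarrow> 'a osep set" where
  "Sk V E k = {s \<in> U V E. card (fst s \<inter> snd s) < k}"

definition degenerate :: "'a osep \<Rightarrow> bool" where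
  "degenerate s \<longleftrightarrow> s = inv s"

definition trivial :: "'a set \<Rightarrow> 'a set set \<Rightarrow> nat \<Rightarrow> 'a osep \<Rightarrow> bool" where
  "trivial V E k r \<longleftrightarrow> (\<exists>s\<in>Sk V E k. sep_less r s \<and> sep_less r (inv s))"

definition is_star :: "'a osep set \<Rightarrow> bool" where
  "is_star \<sigma> \<longleftrightarrow> \<sigma> \<noteq> {} \<and> (\<forall>r\<in>\<sigma>. \<forall>s\<in>\<sigma>. r \<noteq> s \<longrightarrow> sep_le r (inv s))"

definition forces :: "'a osep set set \<Rightarrow> 'a osep \<Rightarrow> bool" where
  "forces F r \<longleftrightarrow> {inv r} \<in> F \<or> degenerate r"

text \<open>F^w_k: stars in S_k (finite, as the vertex set is finite) whose B-sides have
  intersection of size < w.\<close>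
definition Fwk :: "'a set \<Rightarrow> 'a set set \<Rightarrow> nat \<Rightarrow> nat \<Rightarrow> 'a osep set set" where
  "Fwk V E w k = {\<sigma>. is_star \<sigma> \<and> finite \<sigma> \<and> \<sigma> \<subseteq> Sk V E k \<and> card (\<Inter>(snd ` \<sigma>)) < w}"

definition S_ge :: "'a set \<Rightarrow> 'a set set \<Rightarrow> nat \<Rightarrow> 'a osep \<Rightarrow> 'a osep set" where
  "S_ge V E k r = {s \<in> Sk V E k. sep_le r s \<or> sep_le r (inv s)}"

text \<open>Shifting map: f(s) = s \<or> s0 and f(inv s) = inv (s \<or> s0) for s \<ge> r, s \<noteq> inv r
  (well defined for nontrivial nondegenerate r).\<close>
definition shift :: "'a osep \<Rightarrow> 'a osep \<Rightarrow> 'a osep \<Rightarrow> 'a osep" where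
  "shift r s0 x = (if sep_le r x \<and> x \<noteq> inv r then sep_join x s0
                   else inv (sep_join (inv x) s0))"

definition linked :: "'a set \<Rightarrow> 'a set set \<Rightarrow> nat \<Rightarrow> 'a osep \<Rightarrow> 'a osep \<Rightarrow> bool" where
  "linked V E k s0 r \<longleftrightarrow> sep_le r s0 \<and>
     (\<forall>s\<in>Sk V E k. sep_le r s \<and> s \<noteq> inv r \<longrightarrow> sep_join s s0 \<in> Sk V E k)"

definition F_linked :: "'a set \<Rightarrow> 'a set set \<Rightarrow> nat \<Rightarrow> 'a osep set set \<Rightarrow> 'a osep \<Rightarrow> 'a osep \<Rightarrow> bool" where
  "F_linked V E k F s0 r \<longleftrightarrow> linked V E k s0 r \<and>
     (\<forall>\<sigma>\<in>F. is_star \<sigma> \<and> \<sigma> \<subseteq> S_ge V E k r - {inv r} \<and> (\<exists>s\<in>\<sigma>. sep_le r s)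
        \<longrightarrow> shift r s0 ` \<sigma> \<in> F)"

definition F_separable :: "'a set \<Rightarrow> 'a set set \<Rightarrow> nat \<Rightarrow> 'a osep set set \<Rightarrow> bool" where
  "F_separable V E k F \<longleftrightarrow>
     (\<forall>r\<in>Sk V E k. \<forall>r'\<in>Sk V E k. sep_le r r' \<and> \<not> forces F r \<and> \<not> forces F (inv r') \<longrightarrow>
        (\<exists>X Y. (X, Y) \<in> Sk V E k \<and> F_linked V E k F (X, Y) r \<and> F_linked V E k F (Y, X) (inv r')))"

end

theory Submission
  imports Defs
begin

lemma osep_fin:
  assumes "is_osep V E s" "finite V"
  shows "finite (fst s)" "finite (snd s)"
  using assms unfolding is_osep_def by (auto intro: finite_subset)

lemma inv_U: "s \<in> U V E \<Longrightarrow> inv s \<in> U V E"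
  unfolding U_def is_osep_def inv_def by auto

lemma inv_Sk: "s \<in> Sk V E k \<Longrightarrow> inv s \<in> Sk V E k"
  unfolding Sk_def using inv_U[of s V E] by (auto simp: inv_def Int_commute)

lemma inv_inv[simp]: "inv (inv s) = s"
  by (simp add: inv_def)

lemma join_U: "s \<in> U V E \<Longrightarrow> t \<in> U V E \<Longrightarrow> sep_join s t \<in> U V E"
  unfolding U_def is_osep_def sep_join_def by (auto; blast)

lemma meet_U: "s \<in> U V E \<Longrightarrow> t \<in> U V E \<Longrightarrow> sep_meet s t \<in> U V E"
  unfolding U_def is_osep_def sep_meet_def by (auto; blast)

lemma submod:
  assumes "finite A" "finite B" "finite C" "finite D"
  shows "card ((A \<union> C) \<inter> (B \<inter> D)) + card ((A \<inter> C) \<inter> (B \<union> D))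
         \<le> card (A \<inter> B) + card (C \<inter> D)"
proof -
  let ?P = "(A \<union> C) \<inter> (B \<inter> D)" and ?Q = "(A \<inter> C) \<inter> (B \<union> D)"
  have f: "finite ?P" "finite ?Q" using assms by auto
  have "card ?P + card ?Q = card (?P \<union> ?Q) + card (?P \<inter> ?Q)"
    using card_Un_Int[OF f] .
  also have "card (?P \<union> ?Q) \<le> card ((A \<inter> B) \<union> (C \<inter> D))"
    by (rule card_mono) (use assms in auto)
  also have "?P \<inter> ?Q = (A \<inter> B) \<inter> (C \<inter> D)" by auto
  also have "card ((A \<inter> B) \<union> (C \<inter> D)) + card ((A \<inter> B) \<inter> (C \<inter> D)) = card (A \<inter> B) + card (C \<inter> D)"
    using card_Un_Int[of "A \<inter> B" "C \<inter> D"] assms by auto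
  finally show ?thesis by simp
qed

lemma linked_main:
  assumes G: "graph V E" and kw: "k \<le> w"
    and rS: "r \<in> Sk V E k" and xS: "x \<in> Sk V E k" and rx: "sep_le r x"
    and min: "\<And>y. y \<in> U V E \<Longrightarrow> sep_le r y \<Longrightarrow> sep_le y x \<Longrightarrow>
                 card (fst x \<inter> snd x) \<le> card (fst y \<inter> snd y)"
    and nf: "\<not> forces (Fwk V E w k) r"
  shows "F_linked V E k (Fwk V E w k) x r"
proof -
  obtain A B where r: "r = (A, B)" by (cases r)
  obtain X Y where x: "x = (X, Y)" by (cases x)
  have finV: "finite V" using G by (simp add: graph_def)
  have rU: "r \<in> U V E" and xU: "x \<in> U V E" using rS xS by (auto simp: Sk_def)
  have XYV: "X \<union> Y = V" using xU by (simp add: x U_def is_osep_def)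
  have ABV: "A \<union> B = V" using rU by (simp add: r U_def is_osep_def)
  have XA: "A \<subseteq> X" "Y \<subseteq> B" using rx by (auto simp: r x sep_le_def)
  have cardA: "w \<le> card A"
  proof -
    have "{inv r} \<notin> Fwk V E w k" using nf by (simp add: forces_def)
    moreover have "is_star {inv r}" by (simp add: is_star_def)
    moreover have "inv r \<in> Sk V E k" using inv_Sk[OF rS] .
    moreover have "\<Inter>(snd ` {inv r}) = A" by (simp add: r inv_def)
    ultimately show ?thesis by (auto simp: Fwk_def)
  qed
  have notsmall: "\<not> sep_le r (inv r)"
  proof
    assume "sep_le r (inv r)"
    then have "A \<subseteq> B" by (simp add: r inv_def sep_le_def)
    then have "A \<inter> B = A" by auto
    then show False using rS cardA kw by (auto simp: Sk_def r)
  qed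
  have link: "linked V E k x r"
    unfolding linked_def
  proof (intro conjI ballI impI)
    show "sep_le r x" by fact
    fix s assume sS: "s \<in> Sk V E k" and h: "sep_le r s \<and> s \<noteq> inv r"
    obtain C D where s: "s = (C, D)" by (cases s)
    have sU: "s \<in> U V E" using sS by (simp add: Sk_def)
    have fin: "finite C" "finite D" "finite X" "finite Y"
      using osep_fin[of V E s] osep_fin[of V E x] sU xU finV by (auto simp: s x U_def)
    have "sep_meet s x \<in> U V E" using meet_U[OF sU xU] .
    moreover have "sep_le r (sep_meet s x)" using h XA by (auto simp: r s x sep_le_def sep_meet_def)
    moreover have "sep_le (sep_meet s x) x" by (auto simp: s x sep_le_def sep_meet_def)
    ultimately have m: "card (X \<inter> Y) \<le> card ((C \<inter> X) \<inter> (D \<union> Y))"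
      using min by (fastforce simp: x s sep_meet_def)
    have "card ((C \<union> X) \<inter> (D \<inter> Y)) + card ((C \<inter> X) \<inter> (D \<union> Y)) \<le> card (C \<inter> D) + card (X \<inter> Y)"
      using submod[OF fin] .
    then have "card ((C \<union> X) \<inter> (D \<inter> Y)) \<le> card (C \<inter> D)" using m by linarith
    moreover have "card (C \<inter> D) < k" using sS by (simp add: Sk_def s)
    moreover have "sep_join s x \<in> U V E" using join_U[OF sU xU] .
    ultimately show "sep_join s x \<in> Sk V E k" by (simp add: Sk_def s x sep_join_def)
  qed
  show ?thesis
    unfolding F_linked_def
  proof (intro conjI ballI impI)
    show "linked V E k x r" by fact
    fix \<sigma> assume \<sigma>F: "\<sigma> \<in> Fwk V E w k"
      and h: "is_star \<sigma> \<and> \<sigma> \<subseteq> S_ge V E k r - {inv r} \<and> (\<exists>s\<in>\<sigma>. sep_le r s)"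
    then obtain s1 where s1\<sigma>: "s1 \<in> \<sigma>" and rs1: "sep_le r s1" by blast
    have star: "is_star \<sigma>" and sub: "\<sigma> \<subseteq> S_ge V E k r - {inv r}" using h by auto
    have fin\<sigma>: "finite \<sigma>" and oldcard: "card (\<Inter>(snd ` \<sigma>)) < w" using \<sigma>F by (auto simp: Fwk_def)
    obtain E1 F1 where s1: "s1 = (E1, F1)" by (cases s1)
    define T where "T = \<sigma> - {s1}"
    have s1S: "s1 \<in> Sk V E k" using sub s1\<sigma> by (auto simp: S_ge_def)
    have s1ninv: "s1 \<noteq> inv r" using sub s1\<sigma> by auto
    have s1U: "s1 \<in> U V E" using s1S by (simp add: Sk_def)
    have F1V: "F1 \<subseteq> V" and E1V: "E1 \<subseteq> V" using s1U by (auto simp: U_def is_osep_def s1)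
    have tinv: "sep_le t (inv s1)" if "t \<in> T" for t
      using star that s1\<sigma> by (auto simp: is_star_def T_def)
    have tS: "t \<in> Sk V E k" if "t \<in> T" for t using that sub by (auto simp: T_def S_ge_def)
    have tU: "t \<in> U V E" if "t \<in> T" for t using tS[OF that] by (simp add: Sk_def)
    have ntr: "\<not> sep_le r t" if "t \<in> T" for t
    proof
      assume "sep_le r t"
      with tinv[OF that] rs1 have "sep_le r (inv r)"
        by (auto simp: sep_le_def inv_def)
      with notsmall show False ..
    qed
    have rit: "sep_le r (inv t)" if "t \<in> T" for t
      using that sub ntr[OF that] by (auto simp: T_def S_ge_def)
    have itS: "inv t \<in> Sk V E k" if "t \<in> T" for t using inv_Sk[OF tS[OF that]] .
    have itr: "inv t \<noteq> inv r" if "t \<in> T" for t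
      proof
      assume "inv t = inv r"
      then have "t = r" by (metis inv_inv)
      then show False using ntr[OF that] by (simp add: sep_le_def)
    qed
    have sh1: "shift r x s1 = sep_join s1 x" using rs1 s1ninv by (simp add: shift_def)
    have sht: "shift r x t = inv (sep_join (inv t) x)" if "t \<in> T" for t
      using ntr[OF that] by (simp add: shift_def)
    have \<sigma>eq: "\<sigma> = insert s1 T" using s1\<sigma> by (auto simp: T_def)
    have img: "shift r x ` \<sigma> = insert (sep_join s1 x) ((\<lambda>t. inv (sep_join (inv t) x)) ` T)"
      using sh1 sht by (auto simp: \<sigma>eq)
    have j1S: "sep_join s1 x \<in> Sk V E k" using link s1S rs1 s1ninv by (auto simp: linked_def)
    have jtS: "inv (sep_join (inv t) x) \<in> Sk V E k" if "t \<in> T" for t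
      proof -
      have "sep_join (inv t) x \<in> Sk V E k"
        using link itS[OF that] rit[OF that] itr[OF that] by (auto simp: linked_def)
      then show ?thesis by (rule inv_Sk)
    qed
    have tt: "sep_le t (inv t')" if "t \<in> T" "t' \<in> T" "t \<noteq> t'" for t t'
      using star that by (auto simp: is_star_def T_def)
    have newstar: "is_star (shift r x ` \<sigma>)"
      unfolding img is_star_def
    proof (intro conjI ballI impI)
      show "insert (sep_join s1 x) ((\<lambda>t. inv (sep_join (inv t) x)) ` T) \<noteq> {}" by simp
      fix a b assume a: "a \<in> insert (sep_join s1 x) ((\<lambda>t. inv (sep_join (inv t) x)) ` T)"
        and b: "b \<in> insert (sep_join s1 x) ((\<lambda>t. inv (sep_join (inv t) x)) ` T)" and ab: "a \<noteq> b"
      show "sep_le a (inv b)"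
      proof (cases "a = sep_join s1 x")
        case True
        then obtain t where t: "t \<in> T" "b = inv (sep_join (inv t) x)" using b ab by auto
        have "sep_le s1 (inv t)" using tinv[OF t(1)] by (auto simp: sep_le_def inv_def)
        then show ?thesis using True t by (auto simp: sep_le_def inv_def sep_join_def)
      next
        case False
        then obtain t where t: "t \<in> T" "a = inv (sep_join (inv t) x)" using a by auto
        show ?thesis
        proof (cases "b = sep_join s1 x")
          case True
          then show ?thesis using tinv[OF t(1)] t by (auto simp: sep_le_def inv_def sep_join_def)
        next
          case False
          then obtain t' where t': "t' \<in> T" "b = inv (sep_join (inv t') x)" using b by auto
          have "t \<noteq> t'" using ab t t' by auto
          then have "sep_le t (inv t')" "sep_le t' (inv t)" using tt t t' by auto
          then show ?thesis using t t' by (auto simp: sep_le_def inv_def sep_join_def)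
        qed
      qed
    qed
    have newsub: "shift r x ` \<sigma> \<subseteq> Sk V E k" using img j1S jtS by auto
    have newfin: "finite (shift r x ` \<sigma>)" using fin\<sigma> by simp
    define Z where "Z = V \<inter> (\<Inter>t\<in>T. snd t)"
    define Eu where "Eu = (\<Union>t\<in>T. fst t)"
    have finX: "finite X" and finY: "finite Y" using XYV finV by auto
    have Nset: "\<Inter>(snd ` shift r x ` \<sigma>) = (F1 \<inter> Y) \<inter> (\<Inter>t\<in>T. snd t \<union> X)"
      unfolding img by (auto simp: s1 x sep_join_def inv_def)
    have Oset: "\<Inter>(snd ` \<sigma>) = F1 \<inter> Z"
      using F1V by (auto simp: \<sigma>eq s1 Z_def)
    have EuF1: "Eu \<subseteq> F1" using tinv by (auto simp: Eu_def sep_le_def inv_def s1)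
    have AZ: "A \<subseteq> Z"
    proof -
      have "A \<subseteq> E1" using rs1 by (simp add: r s1 sep_le_def)
      moreover have "E1 \<subseteq> snd t" if "t \<in> T" for t using tinv[OF that] by (simp add: s1 sep_le_def inv_def)
      ultimately show ?thesis using E1V unfolding Z_def by auto
    qed
    have EuB: "Eu \<subseteq> B" using rit by (auto simp: Eu_def r sep_le_def inv_def)
    define y where "y = (X \<inter> Z, Y \<union> Eu)"
    have yU: "y \<in> U V E"
    proof -
      have EuV: "Eu \<subseteq> V" using tU by (auto simp: Eu_def U_def is_osep_def)
      have un: "X \<inter> Z \<union> (Y \<union> Eu) = V"
      proof
        show "X \<inter> Z \<union> (Y \<union> Eu) \<subseteq> V" using XYV EuV by auto
        show "V \<subseteq> X \<inter> Z \<union> (Y \<union> Eu)"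
        proof
          fix v assume v: "v \<in> V"
          show "v \<in> X \<inter> Z \<union> (Y \<union> Eu)"
          proof (cases "v \<in> Z")
            case True then show ?thesis using v XYV by auto
          next
            case False
            then obtain t where t: "t \<in> T" "v \<notin> snd t" using v by (auto simp: Z_def)
            then have "v \<in> fst t" using tU[OF t(1)] v by (auto simp: U_def is_osep_def)
            then show ?thesis using t by (auto simp: Eu_def)
          qed
        qed
      qed
      have noedge: "\<not> (\<exists>e\<in>E. e \<inter> (X \<inter> Z - (Y \<union> Eu)) \<noteq> {} \<and> e \<inter> ((Y \<union> Eu) - X \<inter> Z) \<noteq> {})"
      proof
        assume "\<exists>e\<in>E. e \<inter> (X \<inter> Z - (Y \<union> Eu)) \<noteq> {} \<and> e \<inter> ((Y \<union> Eu) - X \<inter> Z) \<noteq> {}"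
        then obtain e a b where e: "e \<in> E" "a \<in> e" "b \<in> e" and a: "a \<in> X" "a \<in> Z" "a \<notin> Y" "a \<notin> Eu"
          and b: "b \<in> Y \<union> Eu" "b \<notin> X \<inter> Z" by blast
        have bV: "b \<in> V" using b(1) XYV EuV by auto
        show False
        proof (cases "b \<in> X")
          case False
          then have "b \<in> Y" using bV XYV by auto
          then show False using xU e a False by (auto simp: x U_def is_osep_def)
        next
          case True
          then have "b \<notin> Z" using b by auto
          then obtain t where t: "t \<in> T" "b \<notin> snd t" using bV by (auto simp: Z_def)
          have "b \<in> fst t" using tU[OF t(1)] bV t by (auto simp: U_def is_osep_def)
          moreover have "a \<in> snd t" "a \<notin> fst t" using a t by (auto simp: Z_def Eu_def)
          ultimately show False using tU[OF t(1)] e t by (auto simp: U_def is_osep_def)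
        qed
      qed
      show ?thesis using un noedge by (simp add: y_def U_def is_osep_def)
    qed
    have "sep_le r y" using XA AZ EuB by (auto simp: r y_def sep_le_def)
    moreover have "sep_le y x" by (auto simp: y_def x sep_le_def)
    ultimately have ymin: "card (X \<inter> Y) \<le> card (X \<inter> Z \<inter> (Y \<union> Eu))"
      using min[OF yU] by (simp add: x y_def)
    define W where "W = X \<inter> Z \<inter> Eu - Y"
    define D where "D = X \<inter> Y - Z"
    have c1: "card (X \<inter> Z \<inter> (Y \<union> Eu)) = card (X \<inter> Y \<inter> Z) + card W"
    proof -
      have "X \<inter> Z \<inter> (Y \<union> Eu) = (X \<inter> Y \<inter> Z) \<union> W" by (auto simp: W_def)
      moreover have "(X \<inter> Y \<inter> Z) \<inter> W = {}" by (auto simp: W_def)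
      ultimately show ?thesis using finX by (simp add: card_Un_disjoint W_def)
    qed
    have c2: "card (X \<inter> Y) = card (X \<inter> Y \<inter> Z) + card D"
    proof -
      have "X \<inter> Y = (X \<inter> Y \<inter> Z) \<union> D" by (auto simp: D_def)
      moreover have "(X \<inter> Y \<inter> Z) \<inter> D = {}" by (auto simp: D_def)
      ultimately show ?thesis using finX by (metis card_Un_disjoint D_def finite_Diff finite_Int)
    qed
    have WD: "card D \<le> card W" using c1 c2 ymin by linarith
    have finF1: "finite F1" using F1V finV by (rule finite_subset)
    have Nsub: "(F1 \<inter> Y) \<inter> (\<Inter>t\<in>T. snd t \<union> X) \<subseteq> (F1 \<inter> Y \<inter> Z) \<union> (F1 \<inter> D)"
      using F1V by (auto simp: Z_def D_def)
    have "card ((F1 \<inter> Y) \<inter> (\<Inter>t\<in>T. snd t \<union> X)) \<le> card ((F1 \<inter> Y \<inter> Z) \<union> (F1 \<inter> D))"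
      using Nsub finF1 by (intro card_mono) auto
    also have "\<dots> \<le> card (F1 \<inter> Y \<inter> Z) + card (F1 \<inter> D)" by (rule card_Un_le)
    also have "card (F1 \<inter> D) \<le> card D" using finX by (intro card_mono) (auto simp: D_def)
    also have "card (F1 \<inter> Y \<inter> Z) + card D \<le> card (F1 \<inter> Y \<inter> Z) + card W" using WD by simp
    also have "card (F1 \<inter> Y \<inter> Z) + card W = card ((F1 \<inter> Y \<inter> Z) \<union> W)"
      using finF1 finX by (intro card_Un_disjoint[symmetric]) (auto simp: W_def)
    also have "\<dots> \<le> card (F1 \<inter> Z)"
      using finF1 EuF1 by (intro card_mono) (auto simp: W_def)
    finally have "card (\<Inter>(snd ` shift r x ` \<sigma>)) \<le> card (\<Inter>(snd ` \<sigma>))"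
      using Nset Oset by simp
    then have "card (\<Inter>(snd ` shift r x ` \<sigma>)) < w" using oldcard by simp
    then show "shift r x ` \<sigma> \<in> Fwk V E w k"
      using newstar newsub newfin by (simp add: Fwk_def)
  qed
qed

lemma card_inv: "card (fst (inv s) \<inter> snd (inv s)) = card (fst s \<inter> snd s)"
  by (simp add: inv_def Int_commute)

theorem lemma5p18:
  fixes V :: "'a set" and E :: "'a set set" and k w :: nat
  assumes "graph V E" and "V \<noteq> {}" and "0 < k" and "k \<le> w"
  shows "F_separable V E k (Fwk V E w k)"
  unfolding F_separable_def
proof (intro ballI impI)
  fix r r' assume rS: "r \<in> Sk V E k" and r'S: "r' \<in> Sk V E k"
    and h: "sep_le r r' \<and> \<not> forces (Fwk V E w k) r \<and> \<not> forces (Fwk V E w k) (inv r')"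
  let ?P = "\<lambda>y. y \<in> U V E \<and> sep_le r y \<and> sep_le y r'"
  let ?m = "\<lambda>y::'a osep. card (fst y \<inter> snd y)"
  have "?P r" using rS h by (auto simp: Sk_def sep_le_def)
  then obtain x where Px: "?P x" and xmin: "\<forall>y. ?P y \<longrightarrow> ?m x \<le> ?m y"
    using ex_has_least_nat[of ?P r ?m] by blast
  have "?m x \<le> ?m r" using xmin \<open>?P r\<close> by blast
  then have xS: "x \<in> Sk V E k" using Px rS by (auto simp: Sk_def)
  have l1: "F_linked V E k (Fwk V E w k) x r"
  proof (rule linked_main[OF assms(1) assms(4) rS xS])
    show "sep_le r x" using Px by simp
    show "\<not> forces (Fwk V E w k) r" using h by simp
    fix y assume "y \<in> U V E" "sep_le r y" "sep_le y x"
    moreover have "sep_le x r'" using Px by simp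
    ultimately have "?P y" by (auto simp: sep_le_def)
    then show "?m x \<le> ?m y" using xmin by blast
  qed
  have l2: "F_linked V E k (Fwk V E w k) (inv x) (inv r')"
  proof (rule linked_main[OF assms(1) assms(4) inv_Sk[OF r'S] inv_Sk[OF xS]])
    show "sep_le (inv r') (inv x)" using Px by (auto simp: sep_le_def inv_def)
    show "\<not> forces (Fwk V E w k) (inv r')" using h by simp
    fix y assume "y \<in> U V E" "sep_le (inv r') y" "sep_le y (inv x)"
    moreover have "sep_le r x" using Px by simp
    moreover have "inv y \<in> U V E" using inv_U \<open>y \<in> U V E\<close> .
    ultimately have "?P (inv y)" by (auto simp: sep_le_def inv_def)
    then have "?m x \<le> ?m (inv y)" using xmin by blast
    then show "?m (inv x) \<le> ?m y" by (simp add: card_inv)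
  qed
  obtain X Y where x: "x = (X, Y)" by (cases x)
  show "\<exists>X Y. (X, Y) \<in> Sk V E k \<and> F_linked V E k (Fwk V E w k) (X, Y) r \<and>
          F_linked V E k (Fwk V E w k) (Y, X) (inv r')"
    using xS l1 l2 by (auto simp: x inv_def)
qed

end
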